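(* Let $\Sigma$ be a finite set of symbols, $\mathbf{x}\in\Sigma^*$, and $S=\{(T_1,\delta_1),\dots,(T_n,\delta_n)\}$ a perturbation space with $T_k=(\varphi_k,f_k)$, $\varphi_k:\Sigma^{s_k}\to\{0,1\}$, $f_k:\Sigma^{s_k}\to2^{\Sigma^{t_k}}$, $s_k\ge1$. Let $F=\{\mathrm{lstm}(\mathbf{z},h_0)\mid\mathbf{z}\in S(\mathbf{x})\}$. Define boxes $\widehat{H}_{i,j}^{S'}$ for $S'\in\mathcal{D}(S)$ by $\widehat{H}_{0,0}^{\varnothing}=\alpha(\{0^d\})$, $\widehat{H}_{i,j}^{S'}=\bot$ whenever $i<0$ or $j<0$ or $(i,j)=(0,0)$ with $S'\neq\varnothing$, and for $i\ge0$, $j\ge1$: $$\widehat{H}_{i,j}^{S'}=\widehat{\mathrm{lstm}}\big(\alpha(\{x_j\}),\widehat{H}_{i-1,j-1}^{S'}\big)\ \sqcup \bigsqcup_{\substack{1\le k\le n,\ \delta'_k\ge1,\ j\ge s_k\\ \varphi_k(\mathbf{x}_{j-s_k+1:j})=1}}\widehat{\mathrm{lstm}}\big(\alpha(f_k(\mathbf{x}_{j-s_k+1:j})),\widehat{H}_{i-t_k,\,j-s_k}^{S'_{k\downarrow}}\big),$$ and $\widehat{F}=\bigsqcup_{S'\in\mathcal{D}(S)}\bigsqcup_{i\ge0}\widehat{H}_{i,|\mathbf{x}|}^{S'}$. Then $F\subseteq\widehat{F}$, and the number of LSTM cell evaluations needed to compute $\widehat{F}$ is $O\big(|\mathbf{x}|\cdot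 n\cdot\prod_{i=1}^n\delta_i\big)$.
   Context: Strings: $\mathbf{x}_{a:b}=x_a\cdots x_b$, $|\mathbf{x}|$ length, $\epsilon$ empty string. A string transformation is $T=(\varphi,f)$, $\varphi:\Sigma^s\to\{0,1\}$, $f:\Sigma^s\to2^{\Sigma^t}$. A perturbation space is $S=\{(T_1,\delta_1),\dots,(T_n,\delta_n)\}$, $\delta_k\in\mathbb{N}$; $S(\mathbf{x})$ is the set of all $\mathbf{z}$ for which there is a factorization $\mathbf{x}=\mathbf{u}_0\mathbf{w}_1\mathbf{u}_1\cdots\mathbf{w}_m\mathbf{u}_m$ and indices $k_l$ with $\varphi_{k_l}(\mathbf{w}_l)=1$, $\mathbf{z}=\mathbf{u}_0\mathbf{w}'_1\mathbf{u}_1\cdots\mathbf{w}'_m\mathbf{u}_m$, $\mathbf{w}'_l\in f_{k_l}(\mathbf{w}_l)$, and each $k$ occurring at most $\delta_k$ times among the $k_l$. $\mathcal{D}(S)$ is the set of all $\{(T_k,\delta'_k)\}_k$ with $0\le\delta'_k\le\delta_k$; $\varnothing$ is the one with all $\delta'_k=0$; $S'_{k\downarrow}$ is $S'$ with $\delta'_k$ decreased by 1. LSTM: an embedding $e:\Sigma\to\mathbb{R}^m$ and a cell $C:\mathbb{R}^m\times\mathbb{R}^d\to\mathbb{R}^d$ give $\mathrm{lstm}(x,h)=C(e(x),h)$, extended to strings by $\mathrm{lstm}(\epsilon,h)=h$, $\mathrm{lstm}(\mathbf{z},h)=\mathrm{lstm}(z_{|\mathbf{z}|},\mathrm{lstm}(\mathbf{z}_{1:|\mathbf{z}|-1},h))$;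 $h_0=0^d$. Interval domain: a box is a product of closed intervals $[l,u]$; $\bot$ denotes the empty abstract element. For a finite nonempty set $X\subset\mathbb{R}^p$, $\alpha(X)$ is the smallest box containing $X$ (componentwise $[\min,\max]$), and $\alpha(\emptyset)=\bot$; for a set of symbols, $\alpha$ is applied to their embeddings. The join $B\sqcup B'$ is the smallest box containing both ($\bot\sqcup B=B$). $\widehat{C}$ is a sound abstract transformer of the cell: for boxes $B_e\subseteq\mathbb{R}^m$, $B_h\subseteq\mathbb{R}^d$, $\widehat{C}(B_e,B_h)$ is a box containing $C(e,h)$ for all $e\in B_e$, $h\in B_h$, and $\widehat{C}(\cdot,\bot)=\widehat{C}(\bot,\cdot)=\bot$. For a finite set $W$ of strings all of length $t$ and a box $B$, $\widehat{\mathrm{lstm}}(\alpha(W),B)$ is computed by $B_0=B$, $B_r=\widehat{C}(\alpha(\{e(w_r):\mathbf{w}\in W\}),B_{r-1})$ for $r=1,\dots,t$, returning $B_t$ (each step is one LSTM cell evaluation). The inclusion $F\subseteq\widehat{F}$ is read with $\bot$ as the empty set. In the complexity bound the sizes $s_k,t_k$ of the transformations are regarded as constants.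
   Formalization: The number of LSTM cell evaluations, not counting those on a $\bot$ box argument, is at most (T+1) |x| max(1,n) prod_k (delta_k+1) for every T bounding all t_k, instead of $O\big(|\mathbf{x}|\cdot n\cdot\prod_{i=1}^n\delta_i\big)$. Apart from conventions, each condition added here is assumed in the paper as well or is needed for the statement above to hold. *)

theory Defs
  imports "HOL-Analysis.Analysis"
begin

text \<open>A string transformation T = (phi, f) with input size s and output size t:
  phi is meant on strings of length s, f maps strings of length s to sets of strings of length t.\<close>
record 'a trans =
  tr_s :: nat
  tr_t :: nat
  tr_phi :: "'a list \<Rightarrow> bool"
  tr_f :: "'a list \<Rightarrow> 'a list set"

text \<open>1-indexed substring x_{a:b} = x_a ... x_b.\<close>
definition substr :: "'a list \<Rightarrow> nat \<Rightarrow> nat \<Rightarrow> 'a list" where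
  "substr x a b = drop (a - 1) (take b x)"

text \<open>A perturbation space S = {(T_1,delta_1),...,(T_n,delta_n)} is given by the list Ts of
  transformations and the list ds of budgets (same length n; index k-1 stands for k).
  perturb Ts ds x is S(x), following the factorization definition literally.\<close>
definition perturb :: "'a trans list \<Rightarrow> nat list \<Rightarrow> 'a list \<Rightarrow> 'a list set" where
  "perturb Ts ds x = {z. \<exists>(m::nat) (u::nat \<Rightarrow> 'a list) (w::nat \<Rightarrow> 'a list) (w'::nat \<Rightarrow> 'a list) (kk::nat \<Rightarrow> nat).
      x = u 0 @ concat (map (\<lambda>l. w l @ u l) [1..<m+1]) \<and>
      z = u 0 @ concat (map (\<lambda>l. w' l @ u l) [1..<m+1]) \<and>
      (\<forall>l\<in>{1..m}. kk l < length Ts \<and> length (w l) = tr_s (Ts ! kk l) \<and>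
                   tr_phi (Ts ! kk l) (w l) \<and> w' l \<in> tr_f (Ts ! kk l) (w l)) \<and>
      (\<forall>k<length Ts. card {l\<in>{1..m}. kk l = k} \<le> ds ! k)}"

definition subspaces :: "nat list \<Rightarrow> nat list set" where
  "subspaces ds = {dl. length dl = length ds \<and> (\<forall>k<length ds. dl ! k \<le> ds ! k)}"

definition lstm_str :: "(real^'m \<Rightarrow> real^'d \<Rightarrow> real^'d) \<Rightarrow> ('a \<Rightarrow> real^'m) \<Rightarrow> 'a list \<Rightarrow> real^'d \<Rightarrow> real^'d" where
  "lstm_str C e z h = fold (\<lambda>c hh. C (e c) hh) z h"

text \<open>A box: None is bottom, Some (l,u) is the product of the intervals [l_i,u_i].\<close>
type_synonym 'n box = "((real^'n) \<times> (real^'n)) option"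

definition gamma :: "'n::finite box \<Rightarrow> (real^'n) set" where
  "gamma B = (case B of None \<Rightarrow> {}
      | Some (l, u) \<Rightarrow> {v. \<forall>i. l $ i \<le> v $ i \<and> v $ i \<le> u $ i})"

text \<open>alpha of a finite set of vectors (smallest enclosing box); alpha of the empty set is bottom.\<close>
definition alpha :: "(real^'n::finite) set \<Rightarrow> 'n box" where
  "alpha X = (if X = {} then None
      else Some ((\<chi> i. Min ((\<lambda>v. v $ i) ` X)), (\<chi> i. Max ((\<lambda>v. v $ i) ` X))))"

text \<open>Join of a set of boxes (smallest box containing all of them; bottom is neutral).
  Correct as the least upper bound whenever only finitely many members are non-bottom.\<close>
definition Join :: "'n::finite box set \<Rightarrow> 'n box" where
  "Join BB = (let X = {p. Some p \<in> BB} in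
      if X = {} then None
      else Some ((\<chi> i. INF p\<in>X. fst p $ i), (\<chi> i. SUP p\<in>X. snd p $ i)))"

definition join :: "'n::finite box \<Rightarrow> 'n box \<Rightarrow> 'n box" where
  "join B B' = Join {B, B'}"

definition sound_cell :: "(real^'m::finite \<Rightarrow> real^'d::finite \<Rightarrow> real^'d) \<Rightarrow> ('m box \<Rightarrow> 'd box \<Rightarrow> 'd box) \<Rightarrow> bool" where
  "sound_cell C Ch \<longleftrightarrow>
     (\<forall>Be Bh ev hv. ev \<in> gamma Be \<longrightarrow> hv \<in> gamma Bh \<longrightarrow> C ev hv \<in> gamma (Ch Be Bh)) \<and>
     (\<forall>Be. Ch Be None = None) \<and> (\<forall>Bh. Ch None Bh = None)"

text \<open>lstm-hat(alpha(W), B) for a set W of strings of length t: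
  B_r = Ch (alpha {e(w_r) | w \<in> W}) B_{r-1}, r = 1..t (t cell evaluations).\<close>
definition lstm_abs :: "('m::finite box \<Rightarrow> 'd::finite box \<Rightarrow> 'd box) \<Rightarrow> ('a \<Rightarrow> real^'m) \<Rightarrow> 'a list set \<Rightarrow> nat \<Rightarrow> 'd box \<Rightarrow> 'd box" where
  "lstm_abs Ch e W t B = fold (\<lambda>r BB. Ch (alpha ((\<lambda>w. e (w ! r)) ` W)) BB) [0..<t] B"

text \<open>Transformation k is applicable at position j (1-indexed end position) under budget dl.\<close>
definition applicable :: "'a trans list \<Rightarrow> 'a list \<Rightarrow> nat list \<Rightarrow> nat \<Rightarrow> nat \<Rightarrow> bool" where
  "applicable Ts x dl j k \<longleftrightarrow> k < length Ts \<and> 1 \<le> dl ! k \<and> tr_s (Ts ! k) \<le> j \<and>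
      tr_phi (Ts ! k) (substr x (j - tr_s (Ts ! k) + 1) j)"

text \<open>Negative indices give bottom
  (guards below); for j = Suc j' the position j - s_k is written j' - (s_k - 1), which equals
  j - s_k since s_k \<ge> 1 and s_k \<le> j.\<close>
fun Hhat :: "('m::finite box \<Rightarrow> 'd::finite box \<Rightarrow> 'd box) \<Rightarrow> ('a \<Rightarrow> real^'m) \<Rightarrow> 'a trans list \<Rightarrow> 'a list
              \<Rightarrow> nat list \<Rightarrow> nat \<Rightarrow> nat \<Rightarrow> 'd box" where
  "Hhat Ch e Ts x dl i 0 = (if i = 0 \<and> dl = replicate (length Ts) 0 then alpha {0} else None)"
| "Hhat Ch e Ts x dl i (Suc j') =
     join (lstm_abs Ch e {[x ! j']} 1 (if i = 0 then None else Hhat Ch e Ts x dl (i - 1) j'))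
          (Join ((\<lambda>k. lstm_abs Ch e (tr_f (Ts ! k) (substr x (Suc j' - tr_s (Ts ! k) + 1) (Suc j')))
                        (tr_t (Ts ! k))
                        (if tr_t (Ts ! k) \<le> i
                         then Hhat Ch e Ts x (dl[k := dl ! k - 1]) (i - tr_t (Ts ! k)) (j' - (tr_s (Ts ! k) - 1))
                         else None))
                 ` {k. applicable Ts x dl (Suc j') k}))"

definition Fhat :: "('m::finite box \<Rightarrow> 'd::finite box \<Rightarrow> 'd box) \<Rightarrow> ('a \<Rightarrow> real^'m) \<Rightarrow> 'a trans list \<Rightarrow> nat list
              \<Rightarrow> 'a list \<Rightarrow> 'd box" where
  "Fhat Ch e Ts ds x = Join {Hhat Ch e Ts x dl i (length x) | dl i. dl \<in> subspaces ds}"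

text \<open>Cell evaluations needed for entry (dl,i,j), j \<ge> 1: one for the x_j step and t_k for every
  applicable k, but only when the box argument is not bottom (Ch(.,bottom) = bottom needs no
  evaluation).\<close>
definition cell_cost :: "('m::finite box \<Rightarrow> 'd::finite box \<Rightarrow> 'd box) \<Rightarrow> ('a \<Rightarrow> real^'m) \<Rightarrow> 'a trans list \<Rightarrow> 'a list
              \<Rightarrow> nat list \<Rightarrow> nat \<Rightarrow> nat \<Rightarrow> nat" where
  "cell_cost Ch e Ts x dl i j =
     (if 1 \<le> i \<and> Hhat Ch e Ts x dl (i - 1) (j - 1) \<noteq> None then 1 else 0) +
     (\<Sum>k\<in>{k. applicable Ts x dl j k}.
        if tr_t (Ts ! k) \<le> i \<and> Hhat Ch e Ts x (dl[k := dl ! k - 1]) (i - tr_t (Ts ! k)) (j - tr_s (Ts ! k)) \<noteq> None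
        then tr_t (Ts ! k) else 0)"

text \<open>Total cost of computing all entries H_{i,j}^{S'}, S' in D(S), 1 \<le> j \<le> |x|, and
  0 \<le> i \<le> |x| * (1 + sum of the t_k) (beyond which all entries are bottom).\<close>
definition total_cost :: "('m::finite box \<Rightarrow> 'd::finite box \<Rightarrow> 'd box) \<Rightarrow> ('a \<Rightarrow> real^'m) \<Rightarrow> 'a trans list \<Rightarrow> nat list
              \<Rightarrow> 'a list \<Rightarrow> nat" where
  "total_cost Ch e Ts ds x =
     (\<Sum>dl\<in>subspaces ds. \<Sum>j\<in>{1..length x}. \<Sum>i\<in>{0..length x * (1 + sum_list (map tr_t Ts))}.
        cell_cost Ch e Ts x dl i j)"

end

theory Submission
  imports Defs
begin


lemma Join_None_iff: "Join BB = None \<longleftrightarrow> (\<forall>p. Some p \<notin> BB)"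
  by (auto simp: Join_def Let_def)

lemma join_None_iff: "join A B = None \<longleftrightarrow> A = None \<and> B = None"
  unfolding join_def Join_None_iff by (cases A; cases B) auto

lemma lstm_abs_None:
  assumes "\<forall>Be. Ch Be None = None"
  shows "lstm_abs Ch e W t None = None"
  using assms by (induction t) (auto simp: lstm_abs_def)

lemma alpha_sound:
  assumes "v \<in> X" "finite X"
  shows "v \<in> gamma (alpha X)"
proof -
  have "X \<noteq> {}" using assms by auto
  moreover have "Min ((\<lambda>v. v $ i) ` X) \<le> v $ i" "v $ i \<le> Max ((\<lambda>v. v $ i) ` X)" for i
    using assms by auto
  ultimately show ?thesis by (auto simp: alpha_def gamma_def)
qed

lemma Join_sound:
  assumes "B \<in> BB" "v \<in> gamma B" "finite {p. Some p \<in> BB}"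
  shows "v \<in> gamma (Join BB)"
proof -
  obtain l u where B: "B = Some (l, u)" using assms(2) by (cases B) (auto simp: gamma_def)
  let ?X = "{p. Some p \<in> BB}"
  have lu: "(l,u) \<in> ?X" using assms B by auto
  have "(INF p\<in>?X. fst p $ i) \<le> l $ i" for i
    using lu assms(3) by (intro cINF_lower2[OF _ lu]) auto
  moreover have "u $ i \<le> (SUP p\<in>?X. snd p $ i)" for i
    using lu assms(3) by (intro cSUP_upper2[OF _ lu]) auto
  moreover have "l $ i \<le> v $ i \<and> v $ i \<le> u $ i" for i using assms(2) B by (auto simp: gamma_def)
  ultimately show ?thesis using lu unfolding Join_def Let_def gamma_def
    by (auto intro: order_trans)
qed

lemma finite_Some: "finite BB \<Longrightarrow> finite {p. Some p \<in> BB}"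
proof -
  assume "finite BB"
  moreover have "{p. Some p \<in> BB} \<subseteq> the ` BB" by force
  ultimately show ?thesis by (meson finite_imageI finite_subset)
qed

lemma join_sound1: "v \<in> gamma A \<Longrightarrow> v \<in> gamma (join A B)"
  unfolding join_def by (rule Join_sound[of A]) (simp, simp, rule finite_Some, simp)
lemma join_sound2: "v \<in> gamma B \<Longrightarrow> v \<in> gamma (join A B)"
  unfolding join_def by (rule Join_sound[of B]) (simp, simp, rule finite_Some, simp)

lemma lstm_str_append: "lstm_str C e (z @ w) h = lstm_str C e w (lstm_str C e z h)"
  by (simp add: lstm_str_def)

lemma lstm_abs_sound:
  fixes e :: "'a::finite \<Rightarrow> real^'m::finite"
  assumes sc: "sound_cell C Ch" and w: "w \<in> W" "length w = t" and h: "h \<in> gamma B"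
  shows "lstm_str C e w h \<in> gamma (lstm_abs Ch e W t B)"
proof -
  have "r \<le> length w \<Longrightarrow> lstm_str C e (take r w) h \<in> gamma (lstm_abs Ch e W r B)" for r
  proof (induction r)
    case 0 then show ?case using h by (simp add: lstm_str_def lstm_abs_def)
  next
    case (Suc r)
    have tk: "take (Suc r) w = take r w @ [w ! r]" using Suc.prems by (simp add: take_Suc_conv_app_nth)
    have fin: "finite ((\<lambda>w. e (w ! r)) ` W)"
      by (rule finite_subset[of _ "range e"]) auto
    have ev: "e (w ! r) \<in> gamma (alpha ((\<lambda>w. e (w ! r)) ` W))"
      using w fin by (intro alpha_sound) auto
    have "C (e (w ! r)) (lstm_str C e (take r w) h) \<in> gamma (Ch (alpha ((\<lambda>w. e (w ! r)) ` W)) (lstm_abs Ch e W r B))"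
      using sc Suc ev unfolding sound_cell_def by auto
    then show ?case using tk by (simp add: lstm_str_def lstm_abs_def)
  qed
  from this[of t] show ?thesis using w by simp
qed



lemma sum_dec:
  fixes g :: "nat \<Rightarrow> nat"
  assumes "k < n" "length dl = n" "1 \<le> dl ! k"
  shows "(\<Sum>k'<n. dl ! k' * g k') = (\<Sum>k'<n. dl[k := dl ! k - 1] ! k' * g k') + g k"
proof -
  have "(\<Sum>k'<n. dl ! k' * g k') = dl ! k * g k + (\<Sum>k'\<in>{..<n} - {k}. dl ! k' * g k')"
    using assms by (simp add: sum.remove)
  moreover have "(\<Sum>k'<n. dl[k := dl ! k - 1] ! k' * g k') = (dl ! k - 1) * g k + (\<Sum>k'\<in>{..<n} - {k}. dl[k := dl ! k - 1] ! k' * g k')"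
    using assms by (simp add: sum.remove)
  moreover have "(\<Sum>k'\<in>{..<n} - {k}. dl[k := dl ! k - 1] ! k' * g k') = (\<Sum>k'\<in>{..<n} - {k}. dl ! k' * g k')"
    by (rule sum.cong) auto
  moreover have "dl ! k * g k = (dl ! k - 1) * g k + g k" using assms(3)
    by (cases "dl ! k") auto
  ultimately show ?thesis by simp
qed

lemma Join_img_None: "Join (f ` A) \<noteq> None \<Longrightarrow> \<exists>k\<in>A. f k \<noteq> None"
  unfolding Join_None_iff by (metis imageE option.distinct(1))

lemma Hhat_inv:
  assumes Chn: "\<forall>Be. Ch Be None = None" and s1: "\<forall>k<length Ts. 1 \<le> tr_s (Ts!k)"
  shows "length dl = length Ts \<Longrightarrow> Hhat Ch e Ts x dl i j \<noteq> None \<Longrightarrow>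
    i + (\<Sum>k<length Ts. dl!k * tr_s (Ts!k)) = j + (\<Sum>k<length Ts. dl!k * tr_t (Ts!k))"
proof (induction j arbitrary: dl i rule: less_induct)
  case (less j)
  show ?case
  proof (cases j)
    case 0
    then have "i = 0 \<and> dl = replicate (length Ts) 0" using less.prems by (auto split: if_splits)
    then show ?thesis using 0 by simp
  next
    case (Suc j')
    let ?A = "lstm_abs Ch e {[x ! j']} 1 (if i = 0 then None else Hhat Ch e Ts x dl (i - 1) j')"
    let ?g = "\<lambda>k. lstm_abs Ch e (tr_f (Ts ! k) (substr x (Suc j' - tr_s (Ts ! k) + 1) (Suc j')))
                        (tr_t (Ts ! k))
                        (if tr_t (Ts ! k) \<le> i
                         then Hhat Ch e Ts x (dl[k := dl ! k - 1]) (i - tr_t (Ts ! k)) (j' - (tr_s (Ts ! k) - 1))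
                         else None)"
    have "join ?A (Join (?g ` {k. applicable Ts x dl (Suc j') k})) \<noteq> None"
      using less.prems Suc by simp
    then have "?A \<noteq> None \<or> (\<exists>k. applicable Ts x dl (Suc j') k \<and> ?g k \<noteq> None)"
    proof -
      assume "join ?A (Join (?g ` {k. applicable Ts x dl (Suc j') k})) \<noteq> None"
      then have "?A \<noteq> None \<or> Join (?g ` {k. applicable Ts x dl (Suc j') k}) \<noteq> None"
        unfolding join_None_iff by (simp only: de_Morgan_conj)
      then show ?thesis using Join_img_None[of ?g "{k. applicable Ts x dl (Suc j') k}"] by blast
    qed
    then show ?thesis
    proof
      assume "?A \<noteq> None"
      have i0: "i \<noteq> 0"
      proof
        assume "i = 0"
        then have "?A = lstm_abs Ch e {[x ! j']} 1 None" by simp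
        then show False using \<open>?A \<noteq> None\<close> by (simp add: lstm_abs_None[of Ch, OF Chn])
      qed
      have "Hhat Ch e Ts x dl (i - 1) j' \<noteq> None"
      proof
        assume "Hhat Ch e Ts x dl (i - 1) j' = None"
        then have "?A = lstm_abs Ch e {[x ! j']} 1 None" using i0 by simp
        then show False using \<open>?A \<noteq> None\<close> by (simp add: lstm_abs_None[of Ch, OF Chn])
      qed
      note i0 this
      with less.IH[of j' dl "i - 1"] less.prems Suc show ?thesis by simp
    next
      assume "\<exists>k. applicable Ts x dl (Suc j') k \<and> ?g k \<noteq> None"
      then obtain k where ap: "applicable Ts x dl (Suc j') k" and gk: "?g k \<noteq> None" by blast
      have t: "tr_t (Ts ! k) \<le> i"
      proof (rule ccontr)
        assume "\<not> tr_t (Ts ! k) \<le> i"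
        then have "?g k = lstm_abs Ch e (tr_f (Ts ! k) (substr x (Suc j' - tr_s (Ts ! k) + 1) (Suc j'))) (tr_t (Ts ! k)) None"
          by simp
        then show False using gk by (simp add: lstm_abs_None[of Ch, OF Chn])
      qed
      have H: "Hhat Ch e Ts x (dl[k := dl ! k - 1]) (i - tr_t (Ts ! k)) (j' - (tr_s (Ts ! k) - 1)) \<noteq> None"
      proof
        assume "Hhat Ch e Ts x (dl[k := dl ! k - 1]) (i - tr_t (Ts ! k)) (j' - (tr_s (Ts ! k) - 1)) = None"
        then have "?g k = lstm_abs Ch e (tr_f (Ts ! k) (substr x (Suc j' - tr_s (Ts ! k) + 1) (Suc j'))) (tr_t (Ts ! k)) None"
          using t by simp
        then show False using gk by (simp add: lstm_abs_None[of Ch, OF Chn])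
      qed
      have k: "k < length Ts" "1 \<le> dl ! k" "tr_s (Ts ! k) \<le> Suc j'" using ap by (auto simp: applicable_def)
      have sk: "1 \<le> tr_s (Ts ! k)" using s1 k by auto
      have IH: "i - tr_t (Ts ! k) + (\<Sum>k'<length Ts. dl[k := dl ! k - 1] ! k' * tr_s (Ts ! k'))
          = j' - (tr_s (Ts ! k) - 1) + (\<Sum>k'<length Ts. dl[k := dl ! k - 1] ! k' * tr_t (Ts ! k'))"
        using less.IH[OF _ _ H] Suc less.prems by simp
      have e1: "(\<Sum>k'<length Ts. dl ! k' * tr_s (Ts ! k')) = (\<Sum>k'<length Ts. dl[k := dl ! k - 1] ! k' * tr_s (Ts ! k')) + tr_s (Ts ! k)"
        using sum_dec[of k "length Ts" dl "\<lambda>k. tr_s (Ts ! k)"] k less.prems by simp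
      have e2: "(\<Sum>k'<length Ts. dl ! k' * tr_t (Ts ! k')) = (\<Sum>k'<length Ts. dl[k := dl ! k - 1] ! k' * tr_t (Ts ! k')) + tr_t (Ts ! k)"
        using sum_dec[of k "length Ts" dl "\<lambda>k. tr_t (Ts ! k)"] k less.prems by simp
      show ?thesis using IH e1 e2 t sk k Suc by linarith
    qed
  qed
qed



inductive reach :: "'a trans list \<Rightarrow> 'a list \<Rightarrow> nat list \<Rightarrow> nat \<Rightarrow> 'a list \<Rightarrow> bool" for Ts x where
  base: "reach Ts x (replicate (length Ts) 0) 0 []"
| plain: "reach Ts x dl j z \<Longrightarrow> j < length x \<Longrightarrow> reach Ts x dl (Suc j) (z @ [x ! j])"
| tr: "reach Ts x dl j z \<Longrightarrow> k < length Ts \<Longrightarrow> j + tr_s (Ts!k) \<le> length x \<Longrightarrow>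
       tr_phi (Ts!k) (substr x (j+1) (j + tr_s (Ts!k))) \<Longrightarrow>
       w' \<in> tr_f (Ts!k) (substr x (j+1) (j + tr_s (Ts!k))) \<Longrightarrow>
       reach Ts x (dl[k := dl!k + 1]) (j + tr_s (Ts!k)) (z @ w')"

lemma reach_len: "reach Ts x dl j z \<Longrightarrow> length dl = length Ts"
  by (induction rule: reach.induct) auto

lemma length_substr: "j + s \<le> length x \<Longrightarrow> length (substr x (j+1) (j+s)) = s"
  by (simp add: substr_def)

lemma reach_sound:
  fixes C :: "real^'m::finite \<Rightarrow> real^'d::finite \<Rightarrow> real^'d"
    and e :: "'a::finite \<Rightarrow> real^'m"
  assumes sc: "sound_cell C Ch"
    and s1: "\<forall>k<length Ts. 1 \<le> tr_s (Ts ! k)"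
    and lf: "\<forall>k<length Ts. \<forall>w. length w = tr_s (Ts ! k) \<longrightarrow>
            (\<forall>w'\<in>tr_f (Ts ! k) w. length w' = tr_t (Ts ! k))"
  shows "reach Ts x dl j z \<Longrightarrow> lstm_str C e z 0 \<in> gamma (Hhat Ch e Ts x dl (length z) j)"
proof (induction rule: reach.induct)
  case base
  then show ?case by (auto simp: lstm_str_def intro: alpha_sound)
next
  case (plain dl j z)
  have "lstm_str C e [x ! j] (lstm_str C e z 0) \<in> gamma (lstm_abs Ch e {[x ! j]} 1 (Hhat Ch e Ts x dl (length z) j))"
    by (rule lstm_abs_sound[OF sc _ _ plain.IH]) auto
  then show ?case by (simp add: lstm_str_append join_sound1)
next
  case (tr dl j z k w')
  define s where "s = tr_s (Ts ! k)"
  define t where "t = tr_t (Ts ! k)"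
  define dl2 where "dl2 = dl[k := dl ! k + 1]"
  have ldl: "length dl = length Ts" using reach_len[OF tr.hyps(1)] .
  have s1k: "1 \<le> s" using s1 tr.hyps(2) s_def by auto
  obtain j' where jdef: "j + s = Suc j'" using s1k by (cases "j + s") auto
  have lw: "length w' = t" using lf tr.hyps(2,3,5) length_substr[of j s x] s_def t_def by auto
  have "Suc j' - s = j" using jdef by simp
  then have sub: "substr x (Suc j' - s + 1) (Suc j') = substr x (j+1) (j+s)" using jdef by simp
  have ap: "applicable Ts x dl2 (Suc j') k"
    using tr.hyps(2,4) ldl jdef sub unfolding applicable_def dl2_def s_def by auto
  have bk: "dl2[k := dl2 ! k - 1] = dl" using ldl tr.hyps(2) by (simp add: dl2_def)
  have jj: "j' - (s - 1) = j" using jdef s1k by simp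
  let ?g = "\<lambda>k. lstm_abs Ch e (tr_f (Ts ! k) (substr x (Suc j' - tr_s (Ts ! k) + 1) (Suc j')))
                        (tr_t (Ts ! k))
                        (if tr_t (Ts ! k) \<le> length z + t
                         then Hhat Ch e Ts x (dl2[k := dl2 ! k - 1]) (length z + t - tr_t (Ts ! k)) (j' - (tr_s (Ts ! k) - 1))
                         else None)"
  have gk: "?g k = lstm_abs Ch e (tr_f (Ts ! k) (substr x (j+1) (j+s))) t (Hhat Ch e Ts x dl (length z) j)"
    using sub bk jj by (simp add: s_def t_def)
  have "lstm_str C e w' (lstm_str C e z 0) \<in> gamma (?g k)"
    unfolding gk by (rule lstm_abs_sound[OF sc _ lw tr.IH]) (use tr.hyps(5) s_def in auto)
  then have "lstm_str C e (z @ w') 0 \<in> gamma (Join (?g ` {k. applicable Ts x dl2 (Suc j') k}))"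
    unfolding lstm_str_append
  proof (rule Join_sound[rotated])
    show "?g k \<in> ?g ` {k. applicable Ts x dl2 (Suc j') k}" using ap by auto
    have "finite {k. applicable Ts x dl2 (Suc j') k}"
      by (rule finite_subset[of _ "{..<length Ts}"]) (auto simp: applicable_def)
    then show "finite {p. Some p \<in> ?g ` {k. applicable Ts x dl2 (Suc j') k}}"
      by (intro finite_Some) auto
  qed
  then have A: "lstm_str C e (z @ w') 0 \<in> gamma (join (lstm_abs Ch e {[x ! j']} 1 (if length z + t = 0 then None else Hhat Ch e Ts x dl2 (length z + t - 1) j')) (Join (?g ` {k. applicable Ts x dl2 (Suc j') k})))"
    by (rule join_sound2)
  have "Hhat Ch e Ts x dl2 (length z + t) (Suc j') = join (lstm_abs Ch e {[x ! j']} 1 (if length z + t = 0 then None else Hhat Ch e Ts x dl2 (length z + t - 1) j')) (Join (?g ` {k. applicable Ts x dl2 (Suc j') k}))"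
    by (rule Hhat.simps(2))
  with A have B: "lstm_str C e (z @ w') 0 \<in> gamma (Hhat Ch e Ts x dl2 (length z + t) (Suc j'))"
    by (simp only:)
  have jdef': "j + tr_s (Ts ! k) = Suc j'" using jdef s_def by simp
  have "length (z @ w') = length z + t" using lw by simp
  then show ?case using B unfolding dl2_def jdef' by (simp only:)
qed



lemma reach_plain_steps:
  "reach Ts x dl j z \<Longrightarrow> x = p @ v @ r \<Longrightarrow> length p = j \<Longrightarrow> reach Ts x dl (j + length v) (z @ v)"
proof (induction v arbitrary: p j z)
  case Nil then show ?case by simp
next
  case (Cons a v)
  have xj: "x ! j = a" "j < length x" using Cons.prems by (auto simp: nth_append)
  have "reach Ts x dl (Suc j) (z @ [x ! j])" by (rule reach.plain[OF Cons.prems(1) xj(2)])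
  then have "reach Ts x dl (Suc j + length v) ((z @ [a]) @ v)"
    using Cons.IH[of "Suc j" "z @ [a]" "p @ [a]"] Cons.prems xj by simp
  then show ?case by simp
qed

lemma card_Suc_filter:
  "card {l\<in>{1..Suc m}. kk l = k'} = card {l\<in>{1..m}. kk l = (k'::nat)} + (if kk (Suc m) = k' then 1 else 0)"
proof -
  have "{l\<in>{1..Suc m}. kk l = k'} = (if kk (Suc m) = k' then insert (Suc m) {l\<in>{1..m}. kk l = k'} else {l\<in>{1..m}. kk l = k'})"
    by (auto simp: le_Suc_eq)
  then show ?thesis by simp
qed

lemma perturb_reach:
  assumes "\<forall>l\<in>{1..m}. kk l < length Ts \<and> length (w l) = tr_s (Ts ! kk l) \<and>
                   tr_phi (Ts ! kk l) (w l) \<and> w' l \<in> tr_f (Ts ! kk l) (w l)"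
    and "x = (u 0 @ concat (map (\<lambda>l. w l @ u l) [1..<m+1])) @ r"
  shows "reach Ts x (map (\<lambda>k. card {l\<in>{1..m}. kk l = k}) [0..<length Ts])
           (length (u 0 @ concat (map (\<lambda>l. w l @ u l) [1..<m+1])))
           (u 0 @ concat (map (\<lambda>l. w' l @ u l) [1..<m+1]))"
  using assms
proof (induction m arbitrary: r)
  case 0
  have "map (\<lambda>k. card {l\<in>{1..0::nat}. kk l = k}) [0..<length Ts] = replicate (length Ts) 0"
    by (simp add: map_replicate_const)
  moreover have "x = [] @ u 0 @ r" using 0(2) by simp
  from reach_plain_steps[OF reach.base this] have "reach Ts x (replicate (length Ts) 0) (0 + length (u 0)) ([] @ u 0)"
    by simp
  ultimately show ?case by simp
next
  case (Suc m)
  define P where "P = u 0 @ concat (map (\<lambda>l. w l @ u l) [1..<m+1])"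
  define Z where "Z = u 0 @ concat (map (\<lambda>l. w' l @ u l) [1..<m+1])"
  define cnt where "cnt = map (\<lambda>k. card {l\<in>{1..m}. kk l = k}) [0..<length Ts]"
  define k where "k = kk (Suc m)"
  have up: "[1..<Suc m + 1] = [1..<m+1] @ [Suc m]" by simp
  have xe: "x = P @ (w (Suc m) @ u (Suc m) @ r)" using Suc.prems(2) unfolding P_def up by simp
  have hk: "k < length Ts" "length (w (Suc m)) = tr_s (Ts ! k)" "tr_phi (Ts ! k) (w (Suc m))"
      "w' (Suc m) \<in> tr_f (Ts ! k) (w (Suc m))"
    using Suc.prems(1) k_def by auto
  have IH: "reach Ts x cnt (length P) Z"
    using Suc.IH[of "w (Suc m) @ u (Suc m) @ r"] xe Suc.prems(1) unfolding P_def Z_def cnt_def by auto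
  have sub: "substr x (length P + 1) (length P + tr_s (Ts ! k)) = w (Suc m)"
    using xe hk(2) by (simp add: substr_def)
  have len: "length P + tr_s (Ts ! k) \<le> length x" using xe hk(2) by simp
  have R1: "reach Ts x (cnt[k := cnt ! k + 1]) (length P + tr_s (Ts ! k)) (Z @ w' (Suc m))"
    by (rule reach.tr[OF IH hk(1) len]) (use sub hk in simp_all)
  have R2: "reach Ts x (cnt[k := cnt ! k + 1]) (length P + tr_s (Ts ! k) + length (u (Suc m))) ((Z @ w' (Suc m)) @ u (Suc m))"
    by (rule reach_plain_steps[OF R1, of "P @ w (Suc m)" _ r]) (use xe hk in simp_all)
  have cnteq: "map (\<lambda>k. card {l\<in>{1..Suc m}. kk l = k}) [0..<length Ts] = cnt[k := cnt ! k + 1]"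
  proof (rule nth_equalityI)
    show "length (map (\<lambda>k. card {l\<in>{1..Suc m}. kk l = k}) [0..<length Ts]) = length (cnt[k := cnt ! k + 1])"
      by (simp add: cnt_def)
    fix i assume "i < length (map (\<lambda>k. card {l\<in>{1..Suc m}. kk l = k}) [0..<length Ts])"
    then have i: "i < length Ts" by simp
    show "map (\<lambda>k. card {l\<in>{1..Suc m}. kk l = k}) [0..<length Ts] ! i = cnt[k := cnt ! k + 1] ! i"
      using i hk(1) card_Suc_filter[of m kk i] by (cases "i = k") (auto simp: cnt_def k_def)
  qed
  have e1: "u 0 @ concat (map (\<lambda>l. w l @ u l) [1..<Suc m+1]) = P @ w (Suc m) @ u (Suc m)"
    unfolding P_def up by simp
  have e2: "u 0 @ concat (map (\<lambda>l. w' l @ u l) [1..<Suc m+1]) = (Z @ w' (Suc m)) @ u (Suc m)"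
    unfolding Z_def up by simp
  show ?case unfolding cnteq e1 e2 using R2 hk(2) by (simp add: add.assoc)
qed



lemma subspaces_Nil: "subspaces [] = {[]}"
  by (auto simp: subspaces_def)

lemma subspaces_Cons: "subspaces (d # ds) = (\<lambda>(a,l). a # l) ` ({..d} \<times> subspaces ds)"
proof
  show "subspaces (d # ds) \<subseteq> (\<lambda>(a,l). a # l) ` ({..d} \<times> subspaces ds)"
  proof
    fix dl assume dl: "dl \<in> subspaces (d # ds)"
    then obtain a l where al: "dl = a # l" by (cases dl) (auto simp: subspaces_def)
    have "a \<le> d" using dl al by (force simp: subspaces_def)
    moreover have "l \<in> subspaces ds"
      using dl al unfolding subspaces_def by force
    ultimately show "dl \<in> (\<lambda>(a,l). a # l) ` ({..d} \<times> subspaces ds)" using al by force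
  qed
next
  show "(\<lambda>(a,l). a # l) ` ({..d} \<times> subspaces ds) \<subseteq> subspaces (d # ds)"
    by (auto simp: subspaces_def nth_Cons split: nat.splits)
qed

lemma subspaces_card: "finite (subspaces ds) \<and> card (subspaces ds) = (\<Prod>k<length ds. ds ! k + 1)"
proof (induction ds)
  case Nil then show ?case by (simp add: subspaces_Nil)
next
  case (Cons d ds)
  have inj: "inj_on (\<lambda>(a,l). a # l) ({..d} \<times> subspaces ds)" by (auto simp: inj_on_def)
  have "card (subspaces (d # ds)) = (d + 1) * card (subspaces ds)"
    unfolding subspaces_Cons using Cons.IH by (simp add: card_image[OF inj] card_cartesian_product)
  also have "\<dots> = (\<Prod>k<length (d # ds). (d # ds) ! k + 1)"
    using Cons.IH unfolding length_Cons prod.lessThan_Suc_shift by simp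
  finally show ?case using Cons.IH unfolding subspaces_Cons by simp
qed

lemma sum_unique:
  fixes c :: nat
  assumes "finite I" "\<And>i i'. P i \<Longrightarrow> P i' \<Longrightarrow> i = i'"
  shows "(\<Sum>i\<in>I. if P i then c else 0) \<le> c"
proof -
  have "(\<Sum>i\<in>I. if P i then c else 0) = (\<Sum>i\<in>{i\<in>I. P i}. c)"
    using assms(1) by (rule sum.inter_filter[symmetric])
  also have "\<dots> = card {i\<in>I. P i} * c" by simp
  also have "card {i\<in>I. P i} \<le> 1"
    using assms by (auto simp: card_le_Suc0_iff_eq)
  then have "card {i\<in>I. P i} * c \<le> 1 * c" by (rule mult_right_mono) simp
  finally show ?thesis by simp
qed



theorem theorem4p2:
  fixes C :: "real^'m::finite \<Rightarrow> real^'d::finite \<Rightarrow> real^'d"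
    and e :: "'a::finite \<Rightarrow> real^'m"
    and Ch :: "'m box \<Rightarrow> 'd box \<Rightarrow> 'd box"
    and Ts :: "'a trans list" and ds :: "nat list" and x :: "'a list"
  assumes "sound_cell C Ch"
    and "length ds = length Ts"
    and "\<forall>k<length Ts. 1 \<le> tr_s (Ts ! k)"
    and "\<forall>k<length Ts. \<forall>w. length w = tr_s (Ts ! k) \<longrightarrow>
            (\<forall>w'\<in>tr_f (Ts ! k) w. length w' = tr_t (Ts ! k))"
  shows "{lstm_str C e z 0 | z. z \<in> perturb Ts ds x} \<subseteq> gamma (Fhat Ch e Ts ds x)
         \<and> (\<forall>T. (\<forall>k<length Ts. tr_t (Ts ! k) \<le> T) \<longrightarrow>
              total_cost Ch e Ts ds x
                \<le> (T + 1) * length x * max 1 (length Ts) * (\<Prod>k<length Ts. ds ! k + 1))"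
proof -
  have Chn: "\<forall>Be. Ch Be None = None" using assms(1) unfolding sound_cell_def by blast
  note inv = Hhat_inv[where Ch=Ch and Ts=Ts, OF Chn assms(3)]
  have fin_ss: "finite (subspaces ds)" using subspaces_card by blast
  have part1: "{lstm_str C e z 0 | z. z \<in> perturb Ts ds x} \<subseteq> gamma (Fhat Ch e Ts ds x)"
  proof
    fix v assume "v \<in> {lstm_str C e z 0 | z. z \<in> perturb Ts ds x}"
    then obtain z where v: "v = lstm_str C e z 0" and zp: "z \<in> perturb Ts ds x" by blast
    from zp obtain m u w w' kk where
      xe: "x = u 0 @ concat (map (\<lambda>l. w l @ u l) [1..<m+1])" and
      ze: "z = u 0 @ concat (map (\<lambda>l. w' l @ u l) [1..<m+1])" and
      cond: "\<forall>l\<in>{1..m}. kk l < length Ts \<and> length (w l) = tr_s (Ts ! kk l) \<and>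
                   tr_phi (Ts ! kk l) (w l) \<and> w' l \<in> tr_f (Ts ! kk l) (w l)" and
      cardb: "\<forall>k<length Ts. card {l\<in>{1..m}. kk l = k} \<le> ds ! k"
      unfolding perturb_def by blast
    define dl where "dl = map (\<lambda>k. card {l\<in>{1..m}. kk l = k}) [0..<length Ts]"
    have xe': "x = (u 0 @ concat (map (\<lambda>l. w l @ u l) [1..<m+1])) @ []" using xe by simp
    have R: "reach Ts x dl (length x) z"
      using perturb_reach[OF cond xe'] xe ze unfolding dl_def by simp
    have dls: "dl \<in> subspaces ds" using cardb assms(2) by (auto simp: subspaces_def dl_def)
    have vin: "v \<in> gamma (Hhat Ch e Ts x dl (length z) (length x))"
      using reach_sound[OF assms(1) assms(3) assms(4) R] v by simp
    define bnd where "bnd = length x + (\<Sum>k<length Ts. ds ! k * tr_t (Ts ! k))"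
    have bound: "i \<le> bnd" if "dl' \<in> subspaces ds" "Hhat Ch e Ts x dl' i (length x) \<noteq> None" for dl' i
    proof -
      have l: "length dl' = length Ts" using that(1) assms(2) by (simp add: subspaces_def)
      have "(\<Sum>k<length Ts. dl' ! k * tr_t (Ts ! k)) \<le> (\<Sum>k<length Ts. ds ! k * tr_t (Ts ! k))"
        using that(1) assms(2) by (intro sum_mono mult_right_mono) (auto simp: subspaces_def)
      then show ?thesis using inv[OF l that(2)] unfolding bnd_def by linarith
    qed
    let ?BB = "{Hhat Ch e Ts x dl i (length x) | dl i. dl \<in> subspaces ds}"
    have "{p. Some p \<in> ?BB} \<subseteq> the ` ((\<lambda>(dl,i). Hhat Ch e Ts x dl i (length x)) ` (subspaces ds \<times> {..bnd}))"
    proof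
      fix p assume "p \<in> {p. Some p \<in> ?BB}"
      then obtain dl' i where h: "Some p = Hhat Ch e Ts x dl' i (length x)" "dl' \<in> subspaces ds" by blast
      then have "i \<le> bnd" using bound by (metis option.distinct(1))
      then show "p \<in> the ` ((\<lambda>(dl,i). Hhat Ch e Ts x dl i (length x)) ` (subspaces ds \<times> {..bnd}))"
        using h by (metis (no_types, lifting) SigmaI atMost_iff case_prod_conv image_eqI option.sel)
    qed
    moreover have "finite (the ` ((\<lambda>(dl,i). Hhat Ch e Ts x dl i (length x)) ` (subspaces ds \<times> {..bnd})))"
      using fin_ss by simp
    ultimately have fin: "finite {p. Some p \<in> ?BB}" by (rule finite_subset)
    show "v \<in> gamma (Fhat Ch e Ts ds x)" unfolding Fhat_def
      by (rule Join_sound[of "Hhat Ch e Ts x dl (length z) (length x)", OF _ vin fin]) (use dls in blast)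
  qed
  have part2: "total_cost Ch e Ts ds x
                \<le> (T + 1) * length x * max 1 (length Ts) * (\<Prod>k<length Ts. ds ! k + 1)"
    if hT: "\<forall>k<length Ts. tr_t (Ts ! k) \<le> T" for T
  proof -
    let ?n = "length Ts"
    have per: "(\<Sum>i\<in>I. cell_cost Ch e Ts x dl i j) \<le> 1 + ?n * T"
      if dls: "dl \<in> subspaces ds" and fI: "finite I" for dl j and I :: "nat set"
    proof -
      have ldl: "length dl = ?n" using dls assms(2) by (simp add: subspaces_def)
      define A where "A = {k. applicable Ts x dl j k}"
      have Asub: "A \<subseteq> {..<?n}" by (auto simp: A_def applicable_def)
      have fA: "finite A" using Asub finite_subset by blast
      define f1 where "f1 = (\<lambda>i. if 1 \<le> i \<and> Hhat Ch e Ts x dl (i - 1) (j - 1) \<noteq> None then 1 else (0::nat))"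
      define g where "g = (\<lambda>k i. if tr_t (Ts ! k) \<le> i \<and> Hhat Ch e Ts x (dl[k := dl ! k - 1]) (i - tr_t (Ts ! k)) (j - tr_s (Ts ! k)) \<noteq> None
        then tr_t (Ts ! k) else 0)"
      have cc: "cell_cost Ch e Ts x dl i j = f1 i + (\<Sum>k\<in>A. g k i)" for i
        unfolding cell_cost_def f1_def g_def A_def by simp
      have "(\<Sum>i\<in>I. cell_cost Ch e Ts x dl i j) = (\<Sum>i\<in>I. f1 i) + (\<Sum>k\<in>A. \<Sum>i\<in>I. g k i)"
        unfolding cc sum.distrib by (simp add: sum.swap[of _ I A])
      moreover have "(\<Sum>i\<in>I. f1 i) \<le> 1"
        unfolding f1_def
      proof (rule sum_unique[OF fI])
        fix i i' assume a: "1 \<le> i \<and> Hhat Ch e Ts x dl (i - 1) (j - 1) \<noteq> None"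
          "1 \<le> i' \<and> Hhat Ch e Ts x dl (i' - 1) (j - 1) \<noteq> None"
        show "i = i'" using inv[OF ldl conjunct2[OF a(1)]] inv[OF ldl conjunct2[OF a(2)]] a by linarith
      qed
      moreover have "(\<Sum>i\<in>I. g k i) \<le> tr_t (Ts ! k)" if kA: "k \<in> A" for k
        unfolding g_def
      proof (rule sum_unique[OF fI])
        have l2: "length (dl[k := dl ! k - 1]) = ?n" using ldl by simp
        fix i i' assume a: "tr_t (Ts ! k) \<le> i \<and> Hhat Ch e Ts x (dl[k := dl ! k - 1]) (i - tr_t (Ts ! k)) (j - tr_s (Ts ! k)) \<noteq> None"
          "tr_t (Ts ! k) \<le> i' \<and> Hhat Ch e Ts x (dl[k := dl ! k - 1]) (i' - tr_t (Ts ! k)) (j - tr_s (Ts ! k)) \<noteq> None"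
        show "i = i'" using inv[OF l2 conjunct2[OF a(1)]] inv[OF l2 conjunct2[OF a(2)]] a by linarith
      qed
      then have "(\<Sum>k\<in>A. \<Sum>i\<in>I. g k i) \<le> (\<Sum>k\<in>A. tr_t (Ts ! k))" by (rule sum_mono)
      moreover have "(\<Sum>k\<in>A. tr_t (Ts ! k)) \<le> (\<Sum>k<?n. tr_t (Ts ! k))"
        using Asub by (intro sum_mono2) auto
      moreover have "(\<Sum>k<?n. tr_t (Ts ! k)) \<le> (\<Sum>k<?n. T)"
        using hT by (intro sum_mono) auto
      ultimately show ?thesis by simp
    qed
    have "total_cost Ch e Ts ds x \<le> (\<Sum>dl\<in>subspaces ds. \<Sum>j\<in>{1..length x}. 1 + ?n * T)"
      unfolding total_cost_def
      by (intro sum_mono per) auto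
    also have "\<dots> = card (subspaces ds) * (length x * (1 + ?n * T))" by simp
    also have "\<dots> = (\<Prod>k<length Ts. ds ! k + 1) * (length x * (1 + ?n * T))"
      using subspaces_card[of ds] assms(2) by simp
    also have "\<dots> \<le> (\<Prod>k<length Ts. ds ! k + 1) * (length x * ((T + 1) * max 1 ?n))"
    proof -
      have "1 + ?n * T \<le> (T + 1) * max 1 ?n"
      proof (cases "?n = 0")
        case True then show ?thesis by simp
      next
        case False then have "max 1 ?n = ?n" by (simp add: max_def Suc_le_eq)
        then have "(T + 1) * max 1 ?n = T * ?n + ?n" by (simp only: algebra_simps)
        moreover have "1 \<le> ?n" using False by linarith
        ultimately show ?thesis by (simp add: mult.commute)
      qed
      then show ?thesis by (intro mult_left_mono) auto
    qed
    also have "\<dots> = (T + 1) * length x * max 1 ?n * (\<Prod>k<length Ts. ds ! k + 1)"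
      by (simp add: algebra_simps)
    finally show ?thesis .
  qed
  show ?thesis using part1 part2 by blast
qed

end
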